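(* Let $C$ and $D$ be centrally symmetric convex bodies in $\mathbb{R}^d$, let $\alpha>0$, and let $C_+:=C+\alpha D$. Then for every set $U\subseteq D^\circ$, $$\mathcal{N}_{(C_+)^\circ}(U,\alpha)\lesssim_d\mathcal{N}_{C^\circ}(U,\alpha).$$
   Context: Polar $X^\circ=\{y:\langle w,y\rangle\le1\ \forall w\in X\}$. For a convex body $E$ with $O\in\operatorname{int}E$, $U\subseteq\mathbb{R}^d$ and $\alpha>0$, $\mathcal{N}_E(U,\alpha)$ is the minimum number $m$ of translates $x_1+\alpha E,\dots,x_m+\alpha E$ ($x_i\in\mathbb{R}^d$) whose union contains $U$. $X\lesssim_d Y$ means $X\le c^dY$ for a constant $c\ge1$ independent of $d$, $C$, $D$, $\alpha$, $U$. *)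

theory Defs
  imports "HOL-Analysis.Analysis"
begin

text \<open>Since the implied constant must be independent of the dimension d, the dimension
  is quantified inside the statement.  We therefore model R^d concretely as the
  functions nat => real vanishing outside {..<d}, with the standard inner product.\<close>

type_synonym rvec = "nat \<Rightarrow> real"

definition Rsp :: "nat \<Rightarrow> rvec set" where
  "Rsp d = {x. \<forall>i\<ge>d. x i = 0}"

definition vadd :: "rvec \<Rightarrow> rvec \<Rightarrow> rvec" where
  "vadd x y = (\<lambda>i. x i + y i)"

definition vsmul :: "real \<Rightarrow> rvec \<Rightarrow> rvec" where
  "vsmul a x = (\<lambda>i. a * x i)"

definition ip :: "nat \<Rightarrow> rvec \<Rightarrow> rvec \<Rightarrow> real" where
  "ip d x y = (\<Sum>i<d. x i * y i)"

definition vnorm :: "nat \<Rightarrow> rvec \<Rightarrow> real" where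
  "vnorm d x = sqrt (ip d x x)"

definition vdist :: "nat \<Rightarrow> rvec \<Rightarrow> rvec \<Rightarrow> real" where
  "vdist d x y = vnorm d (\<lambda>i. x i - y i)"

definition vconvex :: "rvec set \<Rightarrow> bool" where
  "vconvex K \<longleftrightarrow> (\<forall>x\<in>K. \<forall>y\<in>K. \<forall>t::real. 0 \<le> t \<and> t \<le> 1 \<longrightarrow>
                     (\<lambda>i. (1 - t) * x i + t * y i) \<in> K)"

definition convex_body :: "nat \<Rightarrow> rvec set \<Rightarrow> bool" where
  "convex_body d K \<longleftrightarrow>
     K \<subseteq> Rsp d \<and> vconvex K \<and>
     (\<exists>M. \<forall>x\<in>K. vnorm d x \<le> M) \<and>
     (\<forall>x\<in>Rsp d. (\<forall>e>0. \<exists>y\<in>K. vdist d y x < e) \<longrightarrow> x \<in> K) \<and>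
     (\<exists>x\<in>Rsp d. \<exists>r>0. {y\<in>Rsp d. vdist d y x < r} \<subseteq> K)"

definition centrally_symmetric :: "rvec set \<Rightarrow> bool" where
  "centrally_symmetric K \<longleftrightarrow> (\<forall>x\<in>K. (\<lambda>i. - x i) \<in> K)"

definition polar :: "nat \<Rightarrow> rvec set \<Rightarrow> rvec set" where
  "polar d X = {y\<in>Rsp d. \<forall>w\<in>X. ip d w y \<le> 1}"

definition minksum :: "rvec set \<Rightarrow> rvec set \<Rightarrow> rvec set" where
  "minksum A B = {vadd a b | a b. a \<in> A \<and> b \<in> B}"

definition dil :: "real \<Rightarrow> rvec set \<Rightarrow> rvec set" where
  "dil a A = vsmul a ` A"

definition covnum :: "nat \<Rightarrow> rvec set \<Rightarrow> rvec set \<Rightarrow> real \<Rightarrow> nat" where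
  "covnum d E U \<alpha> = (LEAST m. \<exists>X. finite X \<and> card X = m \<and> X \<subseteq> Rsp d \<and>
        U \<subseteq> (\<Union>x\<in>X. (vadd x) ` dil \<alpha> E))"

end

theory Submission
  imports Defs
begin

definition ext :: "nat \<Rightarrow> (nat \<Rightarrow> real) \<Rightarrow> rvec" where
  "ext d y = (\<lambda>i. if i < d then y i else 0)"

definition MM :: "nat \<Rightarrow> (nat \<Rightarrow> real) measure" where
  "MM d = PiM {..<d} (\<lambda>_. lborel)"

definition pre :: "nat \<Rightarrow> rvec set \<Rightarrow> (nat \<Rightarrow> real) set" where
  "pre d A = ext d -` A \<inter> space (MM d)"

definition vol :: "nat \<Rightarrow> rvec set \<Rightarrow> ennreal" where
  "vol d A = emeasure (MM d) (pre d A)"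

interpretation PSF: product_sigma_finite "\<lambda>_::nat. lborel::real measure"
  by (simp add: product_sigma_finite_def sigma_finite_lborel)

lemma lborel_aff:
  fixes r p :: real and B :: "real set"
  assumes r: "r > 0" and B: "B \<in> sets borel"
  shows "emeasure lborel {t. (t - p) / r \<in> B} = ennreal r * emeasure lborel B"
proof -
  have m: "{t. (t - p) / r \<in> B} \<in> sets borel"
  proof -
    have "(\<lambda>t::real. (t - p) / r) \<in> borel_measurable borel" by measurable
    then have "(\<lambda>t::real. (t - p) / r) -` B \<inter> space borel \<in> sets borel" using B by (rule measurable_sets)
    then show ?thesis by (simp add: vimage_def)
  qed
  have "emeasure lborel {t. (t - p) / r \<in> B} =
     emeasure (density (distr lborel borel (\<lambda>x. p + r * x)) (\<lambda>_. ennreal \<bar>r\<bar>)) {t. (t - p) / r \<in> B}"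
    using lborel_real_affine[of r p] r by simp
  also have "\<dots> = ennreal r * emeasure (distr lborel borel (\<lambda>x. p + r * x)) {t. (t - p) / r \<in> B}"
    using m r by (subst emeasure_density_const) auto
  also have "emeasure (distr lborel borel (\<lambda>x. p + r * x)) {t. (t - p) / r \<in> B} = emeasure lborel B"
  proof -
    have "emeasure (distr lborel borel (\<lambda>x. p + r * x)) {t. (t - p) / r \<in> B}
       = emeasure lborel ((\<lambda>x. p + r * x) -` {t. (t - p) / r \<in> B} \<inter> space lborel)"
      using m by (intro emeasure_distr) auto
    also have "(\<lambda>x. p + r * x) -` {t. (t - p) / r \<in> B} \<inter> space lborel = B"
      using r by auto
    finally show ?thesis .
  qed
  finally show ?thesis .
qed

lemma space_MM: "space (MM d) = PiE {..<d} (\<lambda>_. UNIV)"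
  by (simp add: MM_def space_PiM)

lemma distr_aff:
  fixes r :: real and p :: rvec and d :: nat
  assumes r: "r > 0"
  defines "h \<equiv> (\<lambda>y. \<lambda>i\<in>{..<d}. (y i - p i) / r)"
  shows "h \<in> MM d \<rightarrow>\<^sub>M MM d"
    and "\<And>X. X \<in> sets (MM d) \<Longrightarrow> emeasure (MM d) (h -` X \<inter> space (MM d)) = ennreal (r ^ d) * emeasure (MM d) X"
proof -
  show hm: "h \<in> MM d \<rightarrow>\<^sub>M MM d"
    unfolding h_def MM_def by measurable
  define Q where "Q = density (distr (MM d) (MM d) h) (\<lambda>_. ennreal (1 / r ^ d))"
  have QM: "Q = PiM {..<d} (\<lambda>_. lborel)"
  proof (rule PSF.PiM_eqI)
    show "finite {..<d}" by simp
    show "sets Q = sets (PiM {..<d} (\<lambda>_. lborel))" by (simp add: Q_def MM_def)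
    fix A :: "nat \<Rightarrow> real set" assume A: "\<And>i. i \<in> {..<d} \<Longrightarrow> A i \<in> sets lborel"
    have PA: "Pi\<^sub>E {..<d} A \<in> sets (MM d)"
      unfolding MM_def using A by (intro sets_PiM_I_finite) auto
    have "emeasure Q (Pi\<^sub>E {..<d} A) = ennreal (1 / r ^ d) * emeasure (MM d) (h -` Pi\<^sub>E {..<d} A \<inter> space (MM d))"
      unfolding Q_def using PA hm by (simp add: emeasure_density_const emeasure_distr)
    also have "h -` Pi\<^sub>E {..<d} A \<inter> space (MM d) = Pi\<^sub>E {..<d} (\<lambda>i. {t. (t - p i) / r \<in> A i})"
      unfolding h_def space_MM by (auto simp: PiE_def Pi_def extensional_def)
    also have "emeasure (MM d) (Pi\<^sub>E {..<d} (\<lambda>i. {t. (t - p i) / r \<in> A i})) = (\<Prod>i<d. emeasure lborel {t. (t - p i) / r \<in> A i})"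
      unfolding MM_def
    proof (rule PSF.emeasure_PiM)
      fix i assume "i \<in> {..<d}"
      then have "A i \<in> sets borel" using A by auto
      then have "(\<lambda>t::real. (t - p i) / r) -` A i \<inter> space borel \<in> sets borel" 
        by (rule measurable_sets[rotated]) measurable
      then show "{t. (t - p i) / r \<in> A i} \<in> sets lborel" by (simp add: vimage_def)
    qed simp
    also have "\<dots> = (\<Prod>i<d. ennreal r * emeasure lborel (A i))"
      using A r by (intro prod.cong refl lborel_aff) auto
    also have "\<dots> = ennreal r ^ d * (\<Prod>i<d. emeasure lborel (A i))"
      by (simp add: prod.distrib)
    also have "ennreal (1 / r ^ d) * (ennreal r ^ d * (\<Prod>i<d. emeasure lborel (A i))) = (\<Prod>i<d. emeasure lborel (A i))"
    proof -
      have "ennreal (1 / r ^ d) * ennreal r ^ d = 1"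
        using r by (simp add: ennreal_power ennreal_mult[symmetric])
      then show ?thesis by (simp add: mult.assoc[symmetric])
    qed
    finally show "emeasure Q (Pi\<^sub>E {..<d} A) = (\<Prod>i\<in>{..<d}. emeasure lborel (A i))" by simp
  qed
  fix X assume X: "X \<in> sets (MM d)"
  have "emeasure (MM d) X = emeasure Q X" using QM by (simp add: MM_def)
  also have "\<dots> = ennreal (1 / r ^ d) * emeasure (MM d) (h -` X \<inter> space (MM d))"
    unfolding Q_def using X hm by (simp add: emeasure_density_const emeasure_distr)
  finally have e: "emeasure (MM d) X = ennreal (1 / r ^ d) * emeasure (MM d) (h -` X \<inter> space (MM d))" .
  have "ennreal (r ^ d) * ennreal (1 / r ^ d) = 1"
    using r by (auto simp: ennreal_mult[symmetric])
  then show "emeasure (MM d) (h -` X \<inter> space (MM d)) = ennreal (r ^ d) * emeasure (MM d) X"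
    unfolding e by (simp add: mult.assoc[symmetric])
qed

definition aff :: "rvec \<Rightarrow> real \<Rightarrow> rvec \<Rightarrow> rvec" where
  "aff p r x = (\<lambda>i. p i + r * x i)"

lemma vol_aff:
  assumes r: "r > 0" and p: "p \<in> Rsp d" and A: "A \<subseteq> Rsp d" and Am: "pre d A \<in> sets (MM d)"
  shows "pre d (aff p r ` A) \<in> sets (MM d)" and "vol d (aff p r ` A) = ennreal (r ^ d) * vol d A"
proof -
  define h where "h = (\<lambda>y. \<lambda>i\<in>{..<d}. (y i - p i) / r)"
  note hh = distr_aff[OF r, where d=d and p=p, folded h_def]
  have eq: "pre d (aff p r ` A) = h -` pre d A \<inter> space (MM d)"
  proof (intro set_eqI iffI)
    fix y assume y: "y \<in> pre d (aff p r ` A)"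
    then obtain a where a: "a \<in> A" "ext d y = aff p r a" and ys: "y \<in> space (MM d)" by (auto simp: pre_def)
    have "ext d (h y) = a"
    proof
      fix i show "ext d (h y) i = a i"
      proof (cases "i < d")
        case True
        have "ext d y i = p i + r * a i" using a(2) by (simp add: aff_def fun_eq_iff)
        with True r show ?thesis by (simp add: ext_def h_def)
      next
        case False
        then show ?thesis using a(1) A by (auto simp: ext_def h_def Rsp_def)
      qed
    qed
    moreover have "h y \<in> space (MM d)" by (simp add: space_MM h_def)
    ultimately show "y \<in> h -` pre d A \<inter> space (MM d)" using a ys by (simp add: pre_def)
  next
    fix y assume y: "y \<in> h -` pre d A \<inter> space (MM d)"
    then have a: "ext d (h y) \<in> A" and ys: "y \<in> space (MM d)" by (auto simp: pre_def)
    have "ext d y = aff p r (ext d (h y))"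
      using r p by (auto simp: fun_eq_iff ext_def h_def aff_def Rsp_def)
    then show "y \<in> pre d (aff p r ` A)" using a ys by (auto simp: pre_def)
  qed
  show "pre d (aff p r ` A) \<in> sets (MM d)"
    unfolding eq using hh(1) Am by (rule measurable_sets)
  show "vol d (aff p r ` A) = ennreal (r ^ d) * vol d A"
    unfolding vol_def eq using hh(2)[OF Am] .
qed

lemma ext_meas: "ext d \<in> borel_measurable (MM d)"
proof (rule measurable_coordinatewise_then_product)
  fix i
  show "(\<lambda>x. ext d x i) \<in> borel_measurable (MM d)"
  proof (cases "i < d")
    case True
    then have "(\<lambda>x. x i) \<in> borel_measurable (MM d)"
      unfolding MM_def by measurable (simp add: True)
    then show ?thesis using True by (simp add: ext_def)
  qed (simp add: ext_def)
qed

lemma pre_closed: "closed A \<Longrightarrow> pre d A \<in> sets (MM d)"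
  unfolding pre_def using ext_meas borel_closed by (rule measurable_sets)

lemma closed_polar: "closed (polar d X)"
proof -
  have "polar d X = (\<Inter>i\<in>{i. i \<ge> d}. {y. y i = 0}) \<inter> (\<Inter>w\<in>X. {y. ip d w y \<le> 1})"
    by (auto simp: polar_def Rsp_def)
  moreover have "closed {y::rvec. y i = 0}" for i
    by (intro closed_Collect_eq continuous_intros continuous_on_product_coordinates)
  moreover have "closed {y. ip d w y \<le> 1}" for w
    unfolding ip_def by (intro closed_Collect_le continuous_intros continuous_on_product_coordinates)
  ultimately show ?thesis by (metis closed_Int closed_INT)
qed


lemma pre_box: "a \<ge> 0 \<Longrightarrow> pre d {x\<in>Rsp d. \<forall>i<d. \<bar>x i\<bar> \<le> a} = PiE {..<d} (\<lambda>_. {-a..a})"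
  apply (rule set_eqI)
  apply (simp add: pre_def space_MM ext_def Rsp_def PiE_def extensional_def abs_le_iff Pi_iff)
  apply (intro iffI conjI allI impI; (elim conjE)?)
     apply auto
  using minus_le_iff by blast

lemma vol_box: assumes "a \<ge> 0" shows "vol d {x\<in>Rsp d. \<forall>i<d. \<bar>x i\<bar> \<le> a} = ennreal ((2*a)^d)"
    and "pre d {x\<in>Rsp d. \<forall>i<d. \<bar>x i\<bar> \<le> a} \<in> sets (MM d)"
proof -
  show "vol d {x\<in>Rsp d. \<forall>i<d. \<bar>x i\<bar> \<le> a} = ennreal ((2*a)^d)"
    unfolding vol_def pre_box[OF assms] MM_def using assms
    by (subst PSF.emeasure_PiM) (auto simp: ennreal_power)
  show "pre d {x\<in>Rsp d. \<forall>i<d. \<bar>x i\<bar> \<le> a} \<in> sets (MM d)"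
    unfolding pre_box[OF assms] MM_def by (intro sets_PiM_I_finite) auto
qed

lemma vol_mono: "pre d B \<in> sets (MM d) \<Longrightarrow> A \<subseteq> B \<Longrightarrow> vol d A \<le> vol d B"
  unfolding vol_def by (rule emeasure_mono) (auto simp: pre_def)

lemma vol_mono': "pre d A \<in> sets (MM d) \<Longrightarrow> A \<subseteq> B \<Longrightarrow> pre d B \<in> sets (MM d) \<Longrightarrow> vol d A \<le> vol d B"
  by (rule vol_mono)

lemma aff_Rsp: "k \<in> Rsp d \<Longrightarrow> L \<subseteq> Rsp d \<Longrightarrow> aff k R ` L \<subseteq> Rsp d"
  by (auto simp: aff_def Rsp_def)

lemma packing_bound:
  fixes L S P :: "rvec set" and R :: real and k :: rvec
  assumes LR: "L \<subseteq> Rsp d" and Lm: "pre d L \<in> sets (MM d)"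
    and vpos: "0 < vol d L" and vfin: "vol d L < \<infinity>"
    and cvx: "vconvex L" and sym: "centrally_symmetric L"
    and R: "R > 0" and k: "k \<in> Rsp d" and SL: "S \<subseteq> aff k R ` L"
    and P: "finite P" "P \<subseteq> S" and sep: "\<forall>p\<in>P. \<forall>q\<in>P. p \<noteq> q \<longrightarrow> (\<lambda>i. p i - q i) \<notin> L"
  shows "real (card P) \<le> (2*R+1)^d"
proof -
  have SR: "S \<subseteq> Rsp d" using SL aff_Rsp[OF k LR] by blast
  define B where "B p = aff p (1/2) ` L" for p
  have Bm: "pre d (B p) \<in> sets (MM d)" "vol d (B p) = ennreal ((1/2)^d) * vol d L" if "p \<in> P" for p
    using vol_aff[of "1/2" p d L] that P SR LR Lm unfolding B_def by auto
  define G where "G = aff k (R+1/2) ` L"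
  have Gm: "pre d G \<in> sets (MM d)" "vol d G = ennreal ((R+1/2)^d) * vol d L"
    using vol_aff[of "R+1/2" k d L] R k LR Lm unfolding G_def by auto
  have sub: "B p \<subseteq> G" if "p \<in> P" for p
  proof
    fix x assume "x \<in> B p"
    then obtain a where a: "a \<in> L" "x = aff p (1/2) a" by (auto simp: B_def)
    from that P SL obtain c where c: "c \<in> L" "p = aff k R c" by auto
    define t where "t = 1 / (2*R+1)"
    have t: "0 \<le> t" "t \<le> 1" using R by (auto simp: t_def)
    have "(\<lambda>i. (1 - t) * c i + t * a i) \<in> L" using cvx c a t unfolding vconvex_def by blast
    moreover have "x = aff k (R+1/2) (\<lambda>i. (1 - t) * c i + t * a i)"
    proof -
      have e1: "(R+1/2)*(1-t) = R" and e2: "(R+1/2)*t = 1/2" using R by (auto simp: t_def field_simps)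
      have "(R+1/2) * ((1 - t) * c i + t * a i) = R * c i + 1/2 * a i" for i
        by (metis (no_types, opaque_lifting) e1 e2 distrib_left mult.assoc)
      then show ?thesis by (simp add: a c aff_def fun_eq_iff add.assoc)
    qed
    ultimately show "x \<in> G" by (auto simp: G_def)
  qed
  have disj: "disjoint_family_on (\<lambda>p. pre d (B p)) P"
  unfolding disjoint_family_on_def proof (intro ballI impI)
    fix p q assume pq: "p \<in> P" "q \<in> P" "p \<noteq> q"
    show "pre d (B p) \<inter> pre d (B q) = {}"
    proof (rule ccontr)
      assume "pre d (B p) \<inter> pre d (B q) \<noteq> {}"
      then obtain y where "ext d y \<in> B p" "ext d y \<in> B q" by (auto simp: pre_def)
      then obtain a b where ab: "a \<in> L" "b \<in> L" "ext d y = aff p (1/2) a" "ext d y = aff q (1/2) b"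
        by (auto simp: B_def)
      have ma: "(\<lambda>i. - a i) \<in> L" using sym ab(1) by (auto simp: centrally_symmetric_def)
      have "(\<lambda>i. (1 - 1/2) * b i + (1/2) * (- a i)) \<in> L"
      proof -
        have "0 \<le> (1/2::real) \<and> (1/2::real) \<le> 1" by simp
        moreover have "\<forall>y\<in>L. \<forall>t::real. 0 \<le> t \<and> t \<le> 1 \<longrightarrow> (\<lambda>i. (1 - t) * b i + t * y i) \<in> L"
          using cvx ab(2) unfolding vconvex_def by blast
        note bspec[OF this ma]
        ultimately show ?thesis by blast
      qed
      moreover have "(\<lambda>i. p i - q i) = (\<lambda>i. (1 - 1/2) * b i + (1/2) * (- a i))"
      proof
        fix i
        have "p i + 1/2 * a i = q i + 1/2 * b i" using ab(3,4) by (metis aff_def)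
        then show "p i - q i = (1 - 1/2) * b i + (1/2) * (- a i)" by simp
      qed
      ultimately have "(\<lambda>i. p i - q i) \<in> L" by simp
      then show False using sep pq by blast
    qed
  qed
  have "(\<Sum>p\<in>P. vol d (B p)) = emeasure (MM d) (\<Union>p\<in>P. pre d (B p))"
    unfolding vol_def using disj P Bm by (intro sum_emeasure) auto
  also have "\<dots> \<le> emeasure (MM d) (pre d G)"
    using sub Gm by (intro emeasure_mono) (auto simp: pre_def)
  finally have ineq: "(\<Sum>p\<in>P. vol d (B p)) \<le> vol d G" by (simp add: vol_def)
  define v where "v = enn2real (vol d L)"
  have v: "vol d L = ennreal v" "v > 0"
    using vfin vpos by (auto simp: v_def ennreal_enn2real_if enn2real_positive_iff)
  have "(\<Sum>p\<in>P. vol d (B p)) = (\<Sum>p\<in>P. ennreal ((1/2)^d * v))"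
    using Bm(2) v by (intro sum.cong) (auto simp: ennreal_mult)
  also have "\<dots> = ennreal (real (card P) * ((1/2)^d * v))"
    using v by (simp add: ennreal_mult ennreal_of_nat_eq_real_of_nat)
  finally have "ennreal (real (card P) * ((1/2)^d * v)) \<le> ennreal ((R+1/2)^d * v)"
    using ineq Gm(2) v R by (simp add: ennreal_mult)
  then have "real (card P) * ((1/2)^d * v) \<le> (R+1/2)^d * v"
    using v R by (subst (asm) ennreal_le_iff) auto
  then have "real (card P) * (1/2)^d \<le> (R+1/2)^d" using v by (simp add: mult.assoc[symmetric])
  then have "real (card P) * (1/2)^d * 2^d \<le> (R+1/2)^d * 2^d" by (simp add: mult_right_mono)
  moreover have "(R+1/2)^d * 2^d = (2*R+1)^d"
    by (simp add: power_mult_distrib[symmetric] algebra_simps)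
  moreover have "real (card P) * (1/2)^d * 2^d = real (card P)"
    by (simp add: power_mult_distrib[symmetric] mult.assoc)
  ultimately show ?thesis by simp
qed

lemma packing:
  fixes L S :: "rvec set" and R :: real and k :: rvec
  assumes LR: "L \<subseteq> Rsp d" and Lm: "pre d L \<in> sets (MM d)"
    and vpos: "0 < vol d L" and vfin: "vol d L < \<infinity>"
    and cvx: "vconvex L" and sym: "centrally_symmetric L" and L0: "(\<lambda>i. 0) \<in> L"
    and R: "R > 0" and k: "k \<in> Rsp d" and SL: "S \<subseteq> aff k R ` L"
  shows "\<exists>Y. finite Y \<and> Y \<subseteq> S \<and> real (card Y) \<le> (2*R+1)^d \<and> S \<subseteq> (\<Union>y\<in>Y. vadd y ` L)"
proof -
  define sep where "sep P \<longleftrightarrow> (\<forall>p\<in>P. \<forall>q\<in>P. p \<noteq> q \<longrightarrow> (\<lambda>i. p i - q i) \<notin> L)" for P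
  define Kc where "Kc = card ` {P. finite P \<and> P \<subseteq> S \<and> sep P}"
  define b where "b = nat (floor ((2*R+1)^d))"
  have Kb: "Kc \<subseteq> {..b}"
  proof
    fix n assume "n \<in> Kc"
    then obtain P where P: "finite P" "P \<subseteq> S" "sep P" "n = card P" by (auto simp: Kc_def)
    have "real n \<le> (2*R+1)^d"
      using packing_bound[OF LR Lm vpos vfin cvx sym R k SL P(1,2)] P(3,4) by (simp add: sep_def)
    then have "n \<le> b" unfolding b_def by (simp add: le_nat_floor)
    then show "n \<in> {..b}" by simp
  qed
  have fK: "finite Kc" using Kb finite_subset by blast
  have "0 \<in> Kc" unfolding Kc_def sep_def by (rule image_eqI[of _ _ "{}"]) auto
  then have "Kc \<noteq> {}" by blast
  define n where "n = Max Kc"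
  have "n \<in> Kc" using fK \<open>Kc \<noteq> {}\<close> by (simp add: n_def)
  then obtain P where P: "finite P" "P \<subseteq> S" "sep P" "card P = n" by (auto simp: Kc_def)
  have cover: "S \<subseteq> (\<Union>y\<in>P. vadd y ` L)"
  proof
    fix s assume s: "s \<in> S"
    show "s \<in> (\<Union>y\<in>P. vadd y ` L)"
    proof (rule ccontr)
      assume ns: "s \<notin> (\<Union>y\<in>P. vadd y ` L)"
      have vs: "vadd p (\<lambda>i. s i - p i) = s" for p by (simp add: vadd_def)
      have A: "(\<lambda>i. s i - p i) \<notin> L" if "p \<in> P" for p
        using ns that vs[of p] by (metis UN_I imageI)
      have B: "(\<lambda>i. p i - s i) \<notin> L" if "p \<in> P" for p
      proof
        assume "(\<lambda>i. p i - s i) \<in> L"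
        then have "(\<lambda>i. - (p i - s i)) \<in> L" using sym by (auto simp: centrally_symmetric_def)
        then show False using A[OF that] by simp
      qed
      have sP: "s \<notin> P"
      proof
        assume "s \<in> P"
        then show False using A[of s] L0 by simp
      qed
      have "sep (insert s P)" using P(3) A B unfolding sep_def by auto
      then have "card (insert s P) \<in> Kc" using P s unfolding Kc_def by auto
      then have "card (insert s P) \<le> n" using fK by (simp add: n_def)
      then show False using sP P by simp
    qed
  qed
  have "real (card P) \<le> (2*R+1)^d"
    using packing_bound[OF LR Lm vpos vfin cvx sym R k SL P(1,2)] P(3) by (simp add: sep_def)
  then show ?thesis using P cover by blast
qed


lemma polar_Rsp: "polar d X \<subseteq> Rsp d"
  by (auto simp: polar_def)

lemma ip_comb: "ip d w (\<lambda>i. a * x i + b * y i) = a * ip d w x + b * ip d w y"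
  by (simp add: ip_def sum_distrib_left sum.distrib algebra_simps)

lemma ip_comb_left: "ip d (\<lambda>i. a * x i + b * y i) w = a * ip d x w + b * ip d y w"
  by (simp add: ip_def sum_distrib_left sum.distrib algebra_simps)

lemma ip_neg: "ip d w (\<lambda>i. - y i) = ip d (\<lambda>i. - w i) y"
  by (simp add: ip_def)

lemma polar_convex: "vconvex (polar d X)"
  unfolding vconvex_def
proof (intro ballI allI impI)
  fix x y and t :: real assume x: "x \<in> polar d X" and y: "y \<in> polar d X" and t: "0 \<le> t \<and> t \<le> 1"
  have "(\<lambda>i. (1 - t) * x i + t * y i) \<in> Rsp d" using x y by (auto simp: polar_def Rsp_def)
  moreover have "ip d w (\<lambda>i. (1 - t) * x i + t * y i) \<le> 1" if w: "w \<in> X" for w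
  proof -
    have "ip d w x \<le> 1" "ip d w y \<le> 1" using x y w by (auto simp: polar_def)
    then have "(1 - t) * ip d w x + t * ip d w y \<le> (1 - t) * 1 + t * 1"
      using t by (intro add_mono mult_left_mono) auto
    then show ?thesis by (simp add: ip_comb)
  qed
  ultimately show "(\<lambda>i. (1 - t) * x i + t * y i) \<in> polar d X" by (simp add: polar_def)
qed

lemma polar_sym: "centrally_symmetric X \<Longrightarrow> centrally_symmetric (polar d X)"
  unfolding centrally_symmetric_def
proof (intro ballI)
  fix y assume X: "\<forall>x\<in>X. (\<lambda>i. - x i) \<in> X" and y: "y \<in> polar d X"
  have "(\<lambda>i. - y i) \<in> Rsp d" using y by (auto simp: polar_def Rsp_def)
  moreover have "ip d w (\<lambda>i. - y i) \<le> 1" if "w \<in> X" for w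
    using X that y by (auto simp: polar_def ip_neg)
  ultimately show "(\<lambda>i. - y i) \<in> polar d X" by (simp add: polar_def)
qed

lemma dil_aff: "dil r A = aff (\<lambda>i. 0) r ` A"
  by (simp add: dil_def vsmul_def aff_def)

lemma zero_Rsp: "(\<lambda>i. 0) \<in> Rsp d" by (simp add: Rsp_def)

lemma dil_Rsp: "A \<subseteq> Rsp d \<Longrightarrow> dil r A \<subseteq> Rsp d"
  by (auto simp: dil_def vsmul_def Rsp_def)

lemma dil_convex: "vconvex A \<Longrightarrow> vconvex (dil r A)"
  unfolding vconvex_def dil_def vsmul_def
proof (intro ballI allI impI)
  fix x y and t :: real
  assume A: "\<forall>x\<in>A. \<forall>y\<in>A. \<forall>t. 0 \<le> t \<and> t \<le> 1 \<longrightarrow> (\<lambda>i. (1 - t) * x i + t * y i) \<in> A"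
    and x: "x \<in> (\<lambda>x i. r * x i) ` A" and y: "y \<in> (\<lambda>x i. r * x i) ` A" and t: "0 \<le> t \<and> t \<le> 1"
  obtain a b where ab: "a \<in> A" "b \<in> A" "x = (\<lambda>i. r * a i)" "y = (\<lambda>i. r * b i)" using x y by auto
  have "(\<lambda>i. (1 - t) * a i + t * b i) \<in> A" using A ab t by blast
  moreover have "(\<lambda>i. (1 - t) * x i + t * y i) = (\<lambda>i. r * ((1 - t) * a i + t * b i))"
    using ab by (simp add: fun_eq_iff algebra_simps)
  ultimately show "(\<lambda>i. (1 - t) * x i + t * y i) \<in> (\<lambda>x i. r * x i) ` A" by auto
qed

lemma dil_sym: "centrally_symmetric A \<Longrightarrow> centrally_symmetric (dil r A)"
  unfolding centrally_symmetric_def dil_def vsmul_def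
proof (intro ballI)
  fix x assume A: "\<forall>x\<in>A. (\<lambda>i. - x i) \<in> A" and x: "x \<in> (\<lambda>x i. r * x i) ` A"
  then obtain a where a: "a \<in> A" "x = (\<lambda>i. r * a i)" by auto
  have na: "(\<lambda>i. - a i) \<in> A" using A a by blast
  have "(\<lambda>i. - x i) = (\<lambda>x i. r * x i) (\<lambda>i. - a i)" using a by simp
  then show "(\<lambda>i. - x i) \<in> (\<lambda>x i. r * x i) ` A" using na by (metis imageI)
qed

lemma convex_Int: "vconvex A \<Longrightarrow> vconvex B \<Longrightarrow> vconvex (A \<inter> B)"
  unfolding vconvex_def by blast

lemma sym_Int: "centrally_symmetric A \<Longrightarrow> centrally_symmetric B \<Longrightarrow> centrally_symmetric (A \<inter> B)"
  unfolding centrally_symmetric_def by blast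

lemma coord_le_vnorm: "i < d \<Longrightarrow> \<bar>w i\<bar> \<le> vnorm d w"
proof -
  assume i: "i < d"
  have "(w i)^2 \<le> (\<Sum>j<d. w j * w j)"
  proof -
    have "(\<Sum>j\<in>{i}. w j * w j) \<le> (\<Sum>j<d. w j * w j)"
      using i by (intro sum_mono2) auto
    then show ?thesis by (simp add: power2_eq_square)
  qed
  then have "sqrt ((w i)^2) \<le> sqrt (\<Sum>j<d. w j * w j)" by (rule real_sqrt_le_mono)
  then show ?thesis by (simp add: vnorm_def ip_def)
qed

definition cbx :: "nat \<Rightarrow> real \<Rightarrow> rvec set" where
  "cbx d a = {x\<in>Rsp d. \<forall>i<d. \<bar>x i\<bar> \<le> a}"

definition ev :: "nat \<Rightarrow> real \<Rightarrow> rvec" where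
  "ev i c = (\<lambda>j. if j = i then c else 0)"

lemma box_in_polar:
  assumes M: "\<forall>w\<in>X. vnorm d w \<le> M" "0 \<le> M"
  shows "cbx d (1 / (real d * M + 1)) \<subseteq> polar d X"
proof
  fix y assume y: "y \<in> cbx d (1 / (real d * M + 1))"
  define a where "a = 1 / (real d * M + 1)"
  have a: "a > 0" using M by (simp add: a_def add_nonneg_pos)
  have "ip d w y \<le> 1" if w: "w \<in> X" for w
  proof -
    have "ip d w y \<le> (\<Sum>i<d. M * a)"
      unfolding ip_def
    proof (rule sum_mono)
      fix i assume i: "i \<in> {..<d}"
      have "\<bar>w i\<bar> \<le> M" using coord_le_vnorm[of i d w] i M w by force
      moreover have "\<bar>y i\<bar> \<le> a" using y i by (auto simp: cbx_def a_def)
      ultimately have "\<bar>w i\<bar> * \<bar>y i\<bar> \<le> M * a" using M by (intro mult_mono) auto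
      then show "w i * y i \<le> M * a" by (metis abs_ge_self abs_mult order_trans)
    qed
    also have "\<dots> = real d * M * a" by simp
    also have "\<dots> \<le> 1"
    proof -
      have "0 < real d * M + 1" using M by (simp add: add_nonneg_pos)
      then show ?thesis by (simp add: a_def divide_le_eq_1)
    qed
    finally show ?thesis .
  qed
  then show "y \<in> polar d X" using y by (auto simp: polar_def cbx_def)
qed

lemma ip_ev: "i < d \<Longrightarrow> ip d (ev i c) y = c * y i"
proof -
  assume i: "i < d"
  have "(\<Sum>j<d. ev i c j * y j) = (\<Sum>j<d. if j = i then c * y i else 0)"
    by (intro sum.cong) (auto simp: ev_def)
  then show ?thesis using i by (simp add: ip_def)
qed

lemma polar_in_box:
  assumes r: "r > 0" and X: "\<forall>i<d. ev i r \<in> X \<and> ev i (-r) \<in> X"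
  shows "polar d X \<subseteq> cbx d (1 / r)"
proof
  fix y assume y: "y \<in> polar d X"
  have "\<bar>y i\<bar> \<le> 1 / r" if i: "i < d" for i
  proof -
    have "ip d (ev i r) y \<le> 1" "ip d (ev i (-r)) y \<le> 1" using y X i by (auto simp: polar_def)
    then have "r * y i \<le> 1" "- r * y i \<le> 1" using i by (auto simp: ip_ev)
    then have "r * \<bar>y i\<bar> \<le> 1" by (auto simp: abs_if)
    then show ?thesis using r by (simp add: field_simps)
  qed
  then show "y \<in> cbx d (1 / r)" using y by (auto simp: polar_def cbx_def)
qed

lemma vdist_ev: "i < d \<Longrightarrow> vdist d (\<lambda>j. x j + ev i c j) x = \<bar>c\<bar>"
proof -
  assume i: "i < d"
  have "(\<Sum>j<d. (x j + ev i c j - x j) * (x j + ev i c j - x j)) = (\<Sum>j<d. if j = i then c * c else 0)"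
    by (intro sum.cong) (auto simp: ev_def)
  then show ?thesis using i by (simp add: vdist_def vnorm_def ip_def)
qed

lemma body_ev:
  assumes D: "convex_body d D" and S: "centrally_symmetric D"
  shows "\<exists>r>0. \<forall>i<d. ev i r \<in> D \<and> ev i (-r) \<in> D"
proof -
  from D obtain x r where x: "x \<in> Rsp d" and r: "r > 0" and ball: "{y\<in>Rsp d. vdist d y x < r} \<subseteq> D"
    unfolding convex_body_def by blast
  have cvx: "vconvex D" using D by (simp add: convex_body_def)
  have inD: "(\<lambda>j. x j + ev i c j) \<in> D" if "i < d" "\<bar>c\<bar> < r" for i c
  proof -
    have "(\<lambda>j. x j + ev i c j) \<in> Rsp d" using x that by (auto simp: Rsp_def ev_def)
    then show ?thesis using ball vdist_ev[OF that(1), of x c] that by auto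
  qed
  have key: "ev i c \<in> D" if "i < d" "\<bar>c\<bar> < r" for i c
  proof -
    have a: "(\<lambda>j. x j + ev i c j) \<in> D" using inD that by blast
    have "(\<lambda>j. x j + ev i (-c) j) \<in> D" using inD that by auto
    then have b: "(\<lambda>j. - (x j + ev i (-c) j)) \<in> D" using S by (auto simp: centrally_symmetric_def)
    have cv: "\<And>u v t. u \<in> D \<Longrightarrow> v \<in> D \<Longrightarrow> 0 \<le> t \<Longrightarrow> t \<le> 1 \<Longrightarrow> (\<lambda>j. (1-t) * u j + t * v j) \<in> D"
      using cvx unfolding vconvex_def by blast
    have "(\<lambda>j. (1 - 1/2) * (x j + ev i c j) + 1/2 * (- (x j + ev i (-c) j))) \<in> D" using cv[OF a b, of "1/2"] by simp
    moreover have "(\<lambda>j. (1 - 1/2) * (x j + ev i c j) + 1/2 * (- (x j + ev i (-c) j))) = ev i c"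
      by (auto simp: ev_def fun_eq_iff field_simps)
    ultimately show ?thesis by simp
  qed
  show ?thesis using key r by (intro exI[of _ "r/2"]) auto
qed


lemma cv_rule: "vconvex A \<Longrightarrow> u \<in> A \<Longrightarrow> v \<in> A \<Longrightarrow> 0 \<le> t \<Longrightarrow> t \<le> 1 \<Longrightarrow> (\<lambda>j. (1-t) * u j + t * v j) \<in> A"
  unfolding vconvex_def by blast

lemma sym_rule: "centrally_symmetric A \<Longrightarrow> u \<in> A \<Longrightarrow> (\<lambda>j. - u j) \<in> A"
  unfolding centrally_symmetric_def by blast

lemma pre_Int: "pre d (A \<inter> B) = pre d A \<inter> pre d B"
  by (auto simp: pre_def)

lemma box_mono: "a \<le> b \<Longrightarrow> cbx d a \<subseteq> cbx d b"
  by (auto simp: cbx_def)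

lemma box_dil: assumes "c > 0" "cbx d a \<subseteq> A" shows "cbx d (c * a) \<subseteq> dil c A"
proof
  fix y assume y: "y \<in> cbx d (c * a)"
  have "(\<lambda>i. y i / c) \<in> cbx d a" using y assms(1) by (auto simp: cbx_def Rsp_def field_simps abs_div)
  then have "(\<lambda>i. y i / c) \<in> A" using assms by blast
  moreover have "y = vsmul c (\<lambda>i. y i / c)" using assms(1) by (simp add: vsmul_def)
  ultimately show "y \<in> dil c A" by (auto simp: dil_def)
qed

lemma dil_box: assumes "c > 0" "A \<subseteq> cbx d a" shows "dil c A \<subseteq> cbx d (c * a)"
proof
  fix y assume "y \<in> dil c A"
  then obtain x where x: "x \<in> A" "y = vsmul c x" by (auto simp: dil_def)
  then have "x \<in> cbx d a" using assms by blast
  then show "y \<in> cbx d (c * a)" using x assms(1)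
    by (auto simp: cbx_def Rsp_def vsmul_def abs_mult intro: mult_left_mono)
qed

lemma vol_box': "a \<ge> 0 \<Longrightarrow> vol d (cbx d a) = ennreal ((2*a)^d) \<and> pre d (cbx d a) \<in> sets (MM d)"
  using vol_box[of a d] by (simp add: cbx_def)

lemma key_F:
  assumes e: "e \<in> polar d C" and g: "vsmul \<alpha> e \<in> polar d D"
  shows "vsmul (1/2) e \<in> polar d (minksum C (dil \<alpha> D))"
proof -
  have "vsmul (1/2) e \<in> Rsp d" using e by (auto simp: polar_def Rsp_def vsmul_def)
  moreover have "ip d w (vsmul (1/2) e) \<le> 1" if w: "w \<in> minksum C (dil \<alpha> D)" for w
  proof -
    obtain c dd where cd: "c \<in> C" "dd \<in> D" "w = vadd c (vsmul \<alpha> dd)"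
      using w by (auto simp: minksum_def dil_def)
    have "ip d w (vsmul (1/2) e) = 1/2 * ip d c e + 1/2 * ip d dd (vsmul \<alpha> e)"
      by (simp add: cd ip_def vadd_def vsmul_def sum_distrib_left sum.distrib[symmetric] algebra_simps)
    also have "\<dots> \<le> 1/2 * 1 + 1/2 * 1"
      using e g cd by (intro add_mono mult_left_mono) (auto simp: polar_def)
    finally show ?thesis by simp
  qed
  ultimately show ?thesis by (simp add: polar_def)
qed

lemma half_E:
  assumes e: "e \<in> polar d C"
  shows "vsmul (1/2) e \<in> polar d C"
proof -
  have "vsmul (1/2) e \<in> Rsp d" using e by (auto simp: polar_def Rsp_def vsmul_def)
  moreover have "ip d w (vsmul (1/2) e) \<le> 1" if w: "w \<in> C" for w
  proof -
    have "ip d w (vsmul (1/2) e) = 1/2 * ip d w e"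
      by (simp add: ip_def vsmul_def sum_distrib_left algebra_simps)
    also have "\<dots> \<le> 1/2 * 1" using e w by (intro mult_left_mono) (auto simp: polar_def)
    finally show ?thesis by simp
  qed
  ultimately show ?thesis by (simp add: polar_def)
qed

theorem lemma4p3:
  shows "\<exists>c::real. c \<ge> 1 \<and>
    (\<forall>d::nat. \<forall>C D U. \<forall>\<alpha>::real.
       convex_body d C \<longrightarrow> centrally_symmetric C \<longrightarrow>
       convex_body d D \<longrightarrow> centrally_symmetric D \<longrightarrow>
       \<alpha> > 0 \<longrightarrow> U \<subseteq> polar d D \<longrightarrow>
       real (covnum d (polar d (minksum C (dil \<alpha> D))) U \<alpha>)
         \<le> c ^ d * real (covnum d (polar d C) U \<alpha>))"
proof (intro exI[of _ 9] conjI allI impI)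
  show "(1::real) \<le> 9" by simp
  fix d C D U and \<alpha> :: real
  assume Cb: "convex_body d C" and Cs: "centrally_symmetric C"
    and Db: "convex_body d D" and Ds: "centrally_symmetric D"
    and a: "\<alpha> > 0" and UD: "U \<subseteq> polar d D"
  define E where "E = polar d C"
  define F where "F = polar d (minksum C (dil \<alpha> D))"
  define G where "G = dil \<alpha> E \<inter> polar d D"
  define L where "L = dil (1/2) G"
  obtain MC where MC: "\<forall>x\<in>C. vnorm d x \<le> MC" using Cb by (auto simp: convex_body_def)
  define M where "M = max MC 0"
  have M: "\<forall>x\<in>C. vnorm d x \<le> M" "0 \<le> M" using MC by (auto simp: M_def)
  obtain MD where MD: "\<forall>x\<in>D. vnorm d x \<le> MD" using Db by (auto simp: convex_body_def)
  define M2 where "M2 = max MD 0"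
  have M2: "\<forall>x\<in>D. vnorm d x \<le> M2" "0 \<le> M2" using MD by (auto simp: M2_def)
  obtain \<rho> where rho: "\<rho> > 0" "\<forall>i<d. ev i \<rho> \<in> D \<and> ev i (-\<rho>) \<in> D" using body_ev[OF Db Ds] by blast
  define a1 where "a1 = 1 / (real d * M + 1)"
  define a2 where "a2 = 1 / (real d * M2 + 1)"
  have a1: "a1 > 0" using M by (simp add: a1_def add_nonneg_pos)
  have a2: "a2 > 0" using M2 by (simp add: a2_def add_nonneg_pos)
  have bE: "cbx d a1 \<subseteq> E" unfolding E_def a1_def by (rule box_in_polar[OF M])
  have bD: "cbx d a2 \<subseteq> polar d D" unfolding a2_def by (rule box_in_polar[OF M2])
  define a where "a = min (\<alpha> * a1) a2"
  have apos: "a > 0" using a a1 a2 by (simp add: a_def)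
  have bG: "cbx d a \<subseteq> G"
  proof -
    have "cbx d a \<subseteq> cbx d (\<alpha> * a1)" by (rule box_mono) (simp add: a_def)
    also have "\<dots> \<subseteq> dil \<alpha> E" by (rule box_dil[OF a bE])
    finally have 1: "cbx d a \<subseteq> dil \<alpha> E" .
    have "cbx d a \<subseteq> cbx d a2" by (rule box_mono) (simp add: a_def)
    then show ?thesis using 1 bD by (auto simp: G_def)
  qed
  have bL: "cbx d (1/2 * a) \<subseteq> L" unfolding L_def by (rule box_dil[OF _ bG]) simp
  have Gb: "G \<subseteq> cbx d (1 / \<rho>)" using polar_in_box[OF rho] by (auto simp: G_def)
  have Lb: "L \<subseteq> cbx d (1/2 * (1 / \<rho>))" unfolding L_def by (rule dil_box[OF _ Gb]) simp
  have ER: "E \<subseteq> Rsp d" by (simp add: E_def polar_Rsp)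
  have GR: "G \<subseteq> Rsp d" using polar_Rsp by (auto simp: G_def)
  have LR: "L \<subseteq> Rsp d" unfolding L_def by (rule dil_Rsp[OF GR])
  have Em: "pre d E \<in> sets (MM d)" unfolding E_def by (intro pre_closed closed_polar)
  have dEm: "pre d (dil \<alpha> E) \<in> sets (MM d)"
    unfolding dil_aff using vol_aff(1)[OF a zero_Rsp ER Em] .
  have Gm: "pre d G \<in> sets (MM d)"
    unfolding G_def pre_Int using dEm pre_closed[OF closed_polar] by blast
  have Lm: "pre d L \<in> sets (MM d)"
    unfolding L_def dil_aff using vol_aff(1)[OF _ zero_Rsp GR Gm] by simp
  have vpos: "0 < vol d L"
  proof -
    have "vol d (cbx d (1/2 * a)) \<le> vol d L" using vol_mono[OF Lm bL] .
    moreover have "vol d (cbx d (1/2 * a)) = ennreal ((2 * (1/2*a))^d)" using vol_box'[of "1/2*a" d] apos by simp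
    moreover have "0 < ennreal ((2 * (1/2*a))^d)" using apos by simp
    ultimately show ?thesis by order
  qed
  have vfin: "vol d L < \<infinity>"
  proof -
    have bm: "pre d (cbx d (1/2 * (1/\<rho>))) \<in> sets (MM d)" using vol_box'[of "1/2*(1/\<rho>)" d] rho by simp
    have "vol d L \<le> vol d (cbx d (1/2 * (1/\<rho>)))"
      by (rule vol_mono[OF bm Lb])
    also have "\<dots> = ennreal ((2 * (1/2 * (1/\<rho>)))^d)" using vol_box'[of "1/2*(1/\<rho>)" d] rho by simp
    also have "\<dots> < \<infinity>" by simp
    finally show ?thesis .
  qed
  have Econv: "vconvex E" and Esym: "centrally_symmetric E"
    unfolding E_def using polar_convex polar_sym[OF Cs] by auto
  have PDconv: "vconvex (polar d D)" and PDsym: "centrally_symmetric (polar d D)"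
    using polar_convex polar_sym[OF Ds] by auto
  have Lconv: "vconvex L" unfolding L_def G_def
    by (intro dil_convex convex_Int Econv PDconv)
  have Lsym: "centrally_symmetric L" unfolding L_def G_def
    by (intro dil_sym sym_Int Esym PDsym)
  have L0: "(\<lambda>i. 0) \<in> L" using bL apos by (auto simp: cbx_def Rsp_def)
  have LF: "L \<subseteq> dil \<alpha> F"
  proof
    fix y assume "y \<in> L"
    then obtain g where g: "g \<in> G" "y = vsmul (1/2) g" by (auto simp: L_def dil_def)
    then obtain e where e: "e \<in> E" "g = vsmul \<alpha> e" "vsmul \<alpha> e \<in> polar d D" by (auto simp: G_def dil_def)
    have "vsmul (1/2) e \<in> F" unfolding F_def using key_F[of e d C \<alpha> D] e by (simp add: E_def)
    moreover have "y = vsmul \<alpha> (vsmul (1/2) e)" using g e by (simp add: vsmul_def fun_eq_iff)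
    ultimately show "y \<in> dil \<alpha> F" by (auto simp: dil_def)
  qed
  have LE: "L \<subseteq> dil \<alpha> E"
  proof
    fix y assume "y \<in> L"
    then obtain g where g: "g \<in> G" "y = vsmul (1/2) g" by (auto simp: L_def dil_def)
    then obtain e where e: "e \<in> E" "g = vsmul \<alpha> e" by (auto simp: G_def dil_def)
    have "vsmul (1/2) e \<in> E" using half_E e by (simp add: E_def)
    moreover have "y = vsmul \<alpha> (vsmul (1/2) e)" using g e by (simp add: vsmul_def fun_eq_iff)
    ultimately show "y \<in> dil \<alpha> E" by (auto simp: dil_def)
  qed
  have UR: "U \<subseteq> Rsp d" using UD polar_Rsp by blast
  define R0 where "R0 = (1/\<rho>) / (1/2 * a)"
  have R0: "R0 > 0" using rho apos by (simp add: R0_def)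
  have U_in: "U \<subseteq> aff (\<lambda>i. 0) R0 ` L"
  proof
    fix u assume u: "u \<in> U"
    then have "u \<in> cbx d (1/\<rho>)" using UD polar_in_box[OF rho] by blast
    then have ub: "u \<in> Rsp d" "\<And>i. i < d \<Longrightarrow> \<bar>u i\<bar> \<le> 1/\<rho>" by (auto simp: cbx_def)
    have "\<bar>u i / R0\<bar> \<le> 1/2 * a" if "i < d" for i
    proof -
      have "\<bar>u i / R0\<bar> = \<bar>u i\<bar> * (\<rho> * a / 2)" using rho apos by (simp add: R0_def abs_div abs_mult)
      also have "\<dots> \<le> (1/\<rho>) * (\<rho> * a / 2)" using ub(2)[OF that] rho apos by (intro mult_right_mono) auto
      also have "\<dots> = 1/2 * a" using rho by simp
      finally show ?thesis .
    qed
    then have "(\<lambda>i. u i / R0) \<in> cbx d (1/2 * a)" using ub(1) by (auto simp: cbx_def Rsp_def)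
    then have "(\<lambda>i. u i / R0) \<in> L" using bL by blast
    moreover have "u = aff (\<lambda>i. 0) R0 (\<lambda>i. u i / R0)" using R0 by (simp add: aff_def)
    ultimately show "u \<in> aff (\<lambda>i. 0) R0 ` L" by blast
  qed
  obtain Y0 where Y0: "finite Y0" "Y0 \<subseteq> U" "U \<subseteq> (\<Union>y\<in>Y0. vadd y ` L)"
    using packing[OF LR Lm vpos vfin Lconv Lsym L0 R0 zero_Rsp U_in] by blast
  have exE: "\<exists>m X. finite X \<and> card X = m \<and> X \<subseteq> Rsp d \<and> U \<subseteq> (\<Union>x\<in>X. (vadd x) ` dil \<alpha> E)"
    using Y0 UR LE by (intro exI[of _ "card Y0"] exI[of _ Y0]) blast
  define N where "N = covnum d E U \<alpha>"
  have "\<exists>X. finite X \<and> card X = N \<and> X \<subseteq> Rsp d \<and> U \<subseteq> (\<Union>x\<in>X. (vadd x) ` dil \<alpha> E)"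
    unfolding N_def covnum_def using exE by (rule LeastI_ex)
  then obtain X where X: "finite X" "card X = N" "X \<subseteq> Rsp d" "U \<subseteq> (\<Union>x\<in>X. (vadd x) ` dil \<alpha> E)"
    by blast
  have piece: "\<exists>Y. finite Y \<and> Y \<subseteq> U \<and> real (card Y) \<le> 9^d \<and>
      U \<inter> vadd x ` dil \<alpha> E \<subseteq> (\<Union>y\<in>Y. vadd y ` L)" if x: "x \<in> X" for x
  proof (cases "U \<inter> vadd x ` dil \<alpha> E = {}")
    case True
    then show ?thesis by (intro exI[of _ "{}"]) auto
  next
    case False
    define S where "S = U \<inter> vadd x ` dil \<alpha> E"
    obtain s0 where s0: "s0 \<in> S" using False by (auto simp: S_def)
    have s0R: "s0 \<in> Rsp d" using s0 UR by (auto simp: S_def)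
    have SL: "S \<subseteq> aff s0 4 ` L"
    proof
      fix s assume s: "s \<in> S"
      define g where "g = (\<lambda>i. (1 - 1/2) * s i + 1/2 * (- s0 i))"
      have gD: "g \<in> polar d D"
        unfolding g_def using s s0 UD by (intro cv_rule[OF PDconv] sym_rule[OF PDsym]) (auto simp: S_def)
      obtain e1 where e1: "e1 \<in> E" "s = vadd x (vsmul \<alpha> e1)" using s by (auto simp: S_def dil_def)
      obtain e2 where e2: "e2 \<in> E" "s0 = vadd x (vsmul \<alpha> e2)" using s0 by (auto simp: S_def dil_def)
      have "(\<lambda>i. (1 - 1/2) * e1 i + 1/2 * (- e2 i)) \<in> E"
        using e1 e2 by (intro cv_rule[OF Econv] sym_rule[OF Esym]) auto
      moreover have "g = vsmul \<alpha> (\<lambda>i. (1 - 1/2) * e1 i + 1/2 * (- e2 i))"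
        by (simp add: g_def e1 e2 vadd_def vsmul_def fun_eq_iff algebra_simps)
      ultimately have gE: "g \<in> dil \<alpha> E" by (auto simp: dil_def)
      have "g \<in> G" using gD gE by (simp add: G_def)
      then have "vsmul (1/2) g \<in> L" by (auto simp: L_def dil_def)
      moreover have "s = aff s0 4 (vsmul (1/2) g)"
        by (simp add: aff_def vsmul_def g_def fun_eq_iff algebra_simps)
      ultimately show "s \<in> aff s0 4 ` L" by blast
    qed
    obtain Y where Y: "finite Y" "Y \<subseteq> S" "real (card Y) \<le> (2*4+1)^d" "S \<subseteq> (\<Union>y\<in>Y. vadd y ` L)"
      using packing[OF LR Lm vpos vfin Lconv Lsym L0 _ s0R SL] by auto
    show ?thesis using Y by (intro exI[of _ Y]) (auto simp: S_def)
  qed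
  obtain Yf where Yf: "\<And>x. x \<in> X \<Longrightarrow> finite (Yf x) \<and> Yf x \<subseteq> U \<and> real (card (Yf x)) \<le> 9^d \<and>
      U \<inter> vadd x ` dil \<alpha> E \<subseteq> (\<Union>y\<in>Yf x. vadd y ` L)"
    using piece by metis
  define Z where "Z = (\<Union>x\<in>X. Yf x)"
  have Zf: "finite Z" using X(1) Yf by (auto simp: Z_def)
  have ZR: "Z \<subseteq> Rsp d" using Yf UR unfolding Z_def by blast
  have Zc: "U \<subseteq> (\<Union>z\<in>Z. (vadd z) ` dil \<alpha> F)"
  proof
    fix u assume u: "u \<in> U"
    then obtain x where x: "x \<in> X" "u \<in> vadd x ` dil \<alpha> E" using X(4) by blast
    then have "u \<in> (\<Union>y\<in>Yf x. vadd y ` L)" using Yf[OF x(1)] u by blast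
    then obtain y where y: "y \<in> Yf x" "u \<in> vadd y ` L" by blast
    have "u \<in> vadd y ` dil \<alpha> F" using y(2) LF by blast
    moreover have "y \<in> Z" using y(1) x(1) by (auto simp: Z_def)
    ultimately show "u \<in> (\<Union>z\<in>Z. (vadd z) ` dil \<alpha> F)" by blast
  qed
  have "covnum d F U \<alpha> \<le> card Z"
    unfolding covnum_def using Zf ZR Zc by (intro Least_le) blast
  then have "real (covnum d F U \<alpha>) \<le> real (card Z)" by simp
  also have "real (card Z) \<le> real (\<Sum>x\<in>X. card (Yf x))"
    unfolding Z_def using card_UN_le[OF X(1), of Yf] of_nat_mono by blast
  also have "\<dots> = (\<Sum>x\<in>X. real (card (Yf x)))" by simp
  also have "\<dots> \<le> (\<Sum>x\<in>X. 9^d)" using Yf by (intro sum_mono) auto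
  also have "\<dots> = 9^d * real N" using X(2) by simp
  finally show "real (covnum d F U \<alpha>) \<le> 9^d * real (covnum d E U \<alpha>)"
    by (simp add: N_def)
qed


end
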